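(* There is a function $\varepsilon:\mathbb{N}\to[0,\infty)$ with $\varepsilon(n)\to0$ as $n\to\infty$ such that for every $n$ there are permutations $\pi,\tau\in S_n$ with $d(\pi,\tau)=1$ and \[\Delta(\lambda(\pi),\lambda(\tau))\ge(1-\varepsilon(n))\sqrt{n/2}.\]
   Context: Permutations are written in one-line notation. For $\pi\in S_n$, $\lambda(\pi)$ denotes the shape of the tableaux associated with $\pi$ by the RSK correspondence. The distance $d(\pi,\tau)$ is the least number of adjacent transpositions $(k,k+1)$, $1\le k\le n-1$, whose successive left multiplication transforms $\pi$ into $\tau$. For partitions $\lambda,\mu$ of $n$ (parts padded with zeros), $\Delta(\lambda,\mu)=\frac12\sum_{i=1}^n|\lambda_i-\mu_i|$. *)

theory Defs
  imports Complex_Main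
begin

definition is_perm :: "nat \<Rightarrow> nat list \<Rightarrow> bool" where
  "is_perm n p \<longleftrightarrow> length p = n \<and> distinct p \<and> set p = {1..n}"

text \<open>Left multiplication by the adjacent transposition (k,k+1): swap the values k and k+1.\<close>
definition swap_adj :: "nat \<Rightarrow> nat \<Rightarrow> nat" where
  "swap_adj k v = (if v = k then k + 1 else if v = k + 1 then k else v)"

definition adj_step :: "nat \<Rightarrow> nat list \<Rightarrow> nat list \<Rightarrow> bool" where
  "adj_step n p q \<longleftrightarrow> (\<exists>k. 1 \<le> k \<and> k \<le> n - 1 \<and> q = map (swap_adj k) p)"

definition perm_dist :: "nat \<Rightarrow> nat list \<Rightarrow> nat list \<Rightarrow> nat" where
  "perm_dist n p q = (LEAST m. (adj_step n ^^ m) p q)"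

fun bump :: "nat list \<Rightarrow> nat \<Rightarrow> nat list \<times> nat option" where
  "bump [] x = ([x], None)"
| "bump (y # ys) x = (if x < y then (x # ys, Some y)
                      else (let (zs, b) = bump ys x in (y # zs, b)))"

fun rsk_insert :: "nat list list \<Rightarrow> nat \<Rightarrow> nat list list" where
  "rsk_insert [] x = [[x]]"
| "rsk_insert (r # rs) x = (case bump r x of
       (r', None) \<Rightarrow> r' # rs
     | (r', Some y) \<Rightarrow> r' # rsk_insert rs y)"

definition rsk_P :: "nat list \<Rightarrow> nat list list" where
  "rsk_P p = foldl rsk_insert [] p"

definition rsk_shape :: "nat list \<Rightarrow> nat list" where
  "rsk_shape p = map length (rsk_P p)"

text \<open>Parts of a partition padded with zeros (1-based index i is list index i-1).\<close>
definition part :: "nat list \<Rightarrow> nat \<Rightarrow> nat" where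
  "part la i = (if i < length la then la ! i else 0)"

definition Delta :: "nat \<Rightarrow> nat list \<Rightarrow> nat list \<Rightarrow> real" where
  "Delta n la mu = (\<Sum>i<n. \<bar>real (part la i) - real (part mu i)\<bar>) / 2"

end

theory Submission
  imports Defs
begin

definition entries :: "nat list list \<Rightarrow> nat set" where
  "entries T = set (concat T)"

lemma bump_some_in: "snd (bump r x) = Some y \<Longrightarrow> y \<in> set r"
  by (induction r x rule: bump.induct) (auto split: prod.splits if_splits)

lemma bump_fst_set: "set (fst (bump r x)) \<subseteq> insert x (set r)"
  by (induction r x rule: bump.induct) (auto split: prod.splits if_splits)

lemma rsk_insert_entries: "entries (rsk_insert T x) \<subseteq> insert x (entries T)"
proof (induction T x rule: rsk_insert.induct)
  case (1 x) then show ?case by (simp add: entries_def)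
next
  case (2 r rs x)
  show ?case
  proof (cases "bump r x")
    case (Pair r' b)
    have r': "set r' \<subseteq> insert x (set r)" using bump_fst_set[of r x] Pair by simp
    show ?thesis
    proof (cases b)
      case None then show ?thesis using Pair r' by (auto simp: entries_def)
    next
      case (Some y)
      have "y \<in> set r" using bump_some_in[of r x y] Pair Some by simp
      then show ?thesis using Pair Some r' 2[OF Pair[symmetric] Some] by (auto simp: entries_def)
    qed
  qed
qed

lemma foldl_entries: "entries (foldl rsk_insert T xs) \<subseteq> entries T \<union> set xs"
proof (induction xs arbitrary: T)
  case Nil then show ?case by simp
next
  case (Cons a xs) then show ?case using rsk_insert_entries[of T a] by fastforce
qed

lemma rsk_P_entries: "entries (rsk_P w) \<subseteq> set w"
  using foldl_entries[of "[]" w] by (simp add: rsk_P_def entries_def)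

lemma bump_append: "(\<forall>y\<in>set r. y < x) \<Longrightarrow> bump r x = (r @ [x], None)"
  by (induction r) auto

lemma bump_last: "(\<forall>y\<in>set b. y < x) \<Longrightarrow> x < e \<Longrightarrow> bump (b @ [e]) x = (b @ [x], Some e)"
  by (induction b) auto


fun addcol :: "nat list \<Rightarrow> nat list list \<Rightarrow> nat list list" where
  "addcol [] Q = Q"
| "addcol (d # ds) [] = [d] # addcol ds []"
| "addcol (d # ds) (q # qs) = (d # q) # addcol ds qs"

fun appcol :: "nat list \<Rightarrow> nat list list \<Rightarrow> nat list list" where
  "appcol [] B = B"
| "appcol (e # es) [] = [e] # appcol es []"
| "appcol (e # es) (b # bs) = (b @ [e]) # appcol es bs"

lemma CI: "sorted_wrt (<) (x # ds) \<Longrightarrow> length Q \<le> length ds \<Longrightarrow>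
  rsk_insert (addcol ds Q) x = addcol (x # ds) Q"
proof (induction ds arbitrary: x Q)
  case Nil then show ?case by simp
next
  case (Cons d ds)
  show ?case
  proof (cases Q)
    case Nil
    have "rsk_insert (addcol ds []) d = addcol (d # ds) []"
      using Cons.IH[of d "[]"] Cons.prems by simp
    then show ?thesis using Nil Cons.prems by simp
  next
    case (Cons q qs)
    have "rsk_insert (addcol ds qs) d = addcol (d # ds) qs"
      using Cons.IH[of d qs] Cons.prems \<open>Q = q # qs\<close> by simp
    then show ?thesis using Cons Cons.prems by simp
  qed
qed

lemma CIB: "sorted_wrt (<) (x # ds) \<Longrightarrow> length Q = length ds \<Longrightarrow> (\<forall>d\<in>set (x # ds). d < n) \<Longrightarrow>
  rsk_insert (addcol ds (Q @ [[n]])) x = addcol (x # ds) Q @ [[n]]"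
proof (induction ds arbitrary: x Q)
  case Nil then show ?case by simp
next
  case (Cons d ds)
  then obtain q qs where Q: "Q = q # qs" by (cases Q) auto
  have "rsk_insert (addcol ds (qs @ [[n]])) d = addcol (d # ds) qs @ [[n]]"
    using Cons.IH[of d qs] Cons.prems Q by simp
  then show ?case using Q Cons.prems by simp
qed

lemma Lprefix: "(\<forall>d\<in>set ds. d < x \<and> (\<forall>v\<in>entries Q. d < v)) \<Longrightarrow>
  rsk_insert (addcol ds Q) x = addcol ds (rsk_insert Q x)"
proof (induction ds arbitrary: Q x)
  case Nil then show ?case by simp
next
  case (Cons d ds)
  show ?case
  proof (cases Q)
    case Nil
    have "rsk_insert (addcol ds []) x = addcol ds (rsk_insert [] x)"
      by (rule Cons.IH) (use Cons.prems in \<open>simp add: entries_def\<close>)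
    then show ?thesis using Nil Cons.prems by simp
  next
    case (Cons q qs)
    have dx: "\<not> x < d" using Cons.prems by auto
    show ?thesis
    proof (cases "bump q x")
      case (Pair zs b)
      show ?thesis
      proof (cases b)
        case None
        then show ?thesis using Pair dx \<open>Q = q # qs\<close> by simp
      next
        case (Some y)
        have yq: "y \<in> set q" using bump_some_in[of q x y] Pair Some by simp
        have "rsk_insert (addcol ds qs) y = addcol ds (rsk_insert qs y)"
          apply (rule Cons.IH)
          using Cons.prems \<open>Q = q # qs\<close> yq by (auto simp: entries_def)
        then show ?thesis using Pair Some dx \<open>Q = q # qs\<close> by simp
      qed
    qed
  qed
qed

lemma LprefixF: "(\<forall>d\<in>set ds. (\<forall>v\<in>entries Q \<union> set xs. d < v)) \<Longrightarrow>
  foldl rsk_insert (addcol ds Q) xs = addcol ds (foldl rsk_insert Q xs)"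
proof (induction xs arbitrary: Q)
  case Nil then show ?case by simp
next
  case (Cons a xs)
  have "rsk_insert (addcol ds Q) a = addcol ds (rsk_insert Q a)"
    by (rule Lprefix) (use Cons.prems in auto)
  moreover have "foldl rsk_insert (addcol ds (rsk_insert Q a)) xs = addcol ds (foldl rsk_insert (rsk_insert Q a) xs)"
    apply (rule Cons.IH)
    using Cons.prems rsk_insert_entries[of Q a] by fastforce
  ultimately show ?case by simp
qed

lemma L4: "x < n \<Longrightarrow> (\<forall>v\<in>entries T. v < n) \<Longrightarrow> rsk_insert (T @ [[n]]) x = rsk_insert T x @ [[n]]"
proof (induction T arbitrary: x)
  case Nil then show ?case by simp
next
  case (Cons t ts)
  show ?case
  proof (cases "bump t x")
    case (Pair t' b)
    show ?thesis
    proof (cases b)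
      case None then show ?thesis using Pair by simp
    next
      case (Some y)
      have "y \<in> set t" using bump_some_in[of t x y] Pair Some by simp
      then have "rsk_insert (ts @ [[n]]) y = rsk_insert ts y @ [[n]]"
        using Cons.IH[of y] Cons.prems by (auto simp: entries_def)
      then show ?thesis using Pair Some by simp
    qed
  qed
qed

lemma L4F: "(\<forall>v\<in>entries T \<union> set xs. v < n) \<Longrightarrow> foldl rsk_insert (T @ [[n]]) xs = foldl rsk_insert T xs @ [[n]]"
proof (induction xs arbitrary: T)
  case Nil then show ?case by simp
next
  case (Cons a xs)
  have "rsk_insert (T @ [[n]]) a = rsk_insert T a @ [[n]]"
    by (rule L4) (use Cons.prems in auto)
  moreover have "foldl rsk_insert (rsk_insert T a @ [[n]]) xs = foldl rsk_insert (rsk_insert T a) xs @ [[n]]"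
    apply (rule Cons.IH)
    using Cons.prems rsk_insert_entries[of T a] by fastforce
  ultimately show ?case by simp
qed

lemma CL: "sorted_wrt (<) (x # xs) \<Longrightarrow> length xs < length B \<Longrightarrow>
   (\<forall>i\<le>length xs. \<forall>y\<in>set (B ! i). y < x) \<Longrightarrow>
   rsk_insert (appcol xs B) x = appcol (x # xs) B"
proof (induction xs arbitrary: x B)
  case Nil
  then obtain b bs where B: "B = b # bs" by (cases B) auto
  then show ?case using Nil bump_append[of b x] by simp
next
  case (Cons e xs)
  then obtain b bs where B: "B = b # bs" by (cases B) auto
  have bx: "\<forall>y\<in>set b. y < x" using Cons.prems(3) B by force
  have xe: "x < e" using Cons.prems(1) by simp
  have "rsk_insert (appcol xs bs) e = appcol (e # xs) bs"
  proof (rule Cons.IH)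
    show "sorted_wrt (<) (e # xs)" using Cons.prems(1) by simp
    show "length xs < length bs" using Cons.prems(2) B by simp
    show "\<forall>i\<le>length xs. \<forall>y\<in>set (bs ! i). y < e"
    proof (intro allI impI ballI)
      fix i y assume i: "i \<le> length xs" and y: "y \<in> set (bs ! i)"
      have "y \<in> set (B ! Suc i)" using y B by simp
      then have "y < x" using Cons.prems(3) i by (metis Suc_le_mono length_Cons)
      then show "y < e" using xe by simp
    qed
  qed
  then show ?case using B bump_last[OF bx xe] by simp
qed

lemma CLs: "sorted_wrt (<) (rev ys @ xs) \<Longrightarrow> length ys + length xs \<le> length B \<Longrightarrow>
   (\<forall>i<length ys + length xs. \<forall>y\<in>set (B ! i). \<forall>z\<in>set ys. y < z) \<Longrightarrow>
   foldl rsk_insert (appcol xs B) ys = appcol (rev ys @ xs) B"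
proof (induction ys arbitrary: xs)
  case Nil then show ?case by simp
next
  case (Cons z zs)
  have "rsk_insert (appcol xs B) z = appcol (z # xs) B"
  proof (rule CL)
    show "sorted_wrt (<) (z # xs)" using Cons.prems(1) by (simp add: sorted_wrt_append)
    show "length xs < length B" using Cons.prems(2) by simp
    show "\<forall>i\<le>length xs. \<forall>y\<in>set (B ! i). y < z"
      using Cons.prems(3) by (metis add_Suc le_imp_less_Suc length_Cons less_add_Suc2 list.set_intros(1) order_le_less_trans add.commute)
  qed
  moreover have "foldl rsk_insert (appcol (z # xs) B) zs = appcol (rev zs @ (z # xs)) B"
  proof (rule Cons.IH)
    show "sorted_wrt (<) (rev zs @ z # xs)" using Cons.prems(1) by simp
    show "length zs + length (z # xs) \<le> length B" using Cons.prems(2) by simp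
    show "\<forall>i<length zs + length (z # xs). \<forall>y\<in>set (B ! i). \<forall>z\<in>set zs. y < z"
      using Cons.prems(3) by simp
  qed
  ultimately show ?case by simp
qed

lemma ID: "length es = length Q \<Longrightarrow> Suc (length Q) < length cs \<Longrightarrow>
  appcol es (addcol cs (Q @ [[n]])) = appcol (es @ [n]) (addcol cs Q)"
proof (induction Q arbitrary: es cs)
  case Nil
  then obtain c cs' where "cs = c # cs'" by (cases cs) auto
  then show ?case using Nil by simp
next
  case (Cons q qs)
  then obtain c cs' where cs: "cs = c # cs'" by (cases cs) auto
  obtain e es' where es: "es = e # es'" using Cons.prems by (cases es) auto
  show ?case using Cons.IH[of es' cs'] Cons.prems cs es by simp
qed

lemma addcol_nil_len: "map length (addcol cs []) = replicate (length cs) 1"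
  by (induction cs) auto

lemma appcol_addcol_nil: "length xs = length cs \<Longrightarrow> map length (appcol xs (addcol cs [])) = replicate (length cs) 2"
proof (induction cs arbitrary: xs)
  case Nil then show ?case by simp
next
  case (Cons c cs)
  then obtain x xs' where "xs = x # xs'" by (cases xs) auto
  then show ?case using Cons by simp
qed

lemma SA: "length xs = length cs \<Longrightarrow> length Q \<le> length cs \<Longrightarrow>
  map length (appcol xs (addcol cs Q)) = map (\<lambda>l. l + 2) (map length Q) @ replicate (length cs - length Q) 2"
proof (induction cs arbitrary: xs Q)
  case Nil then show ?case by simp
next
  case (Cons c cs)
  then obtain x xs' where xs: "xs = x # xs'" by (cases xs) auto
  show ?case
  proof (cases Q)
    case Nil then show ?thesis using xs Cons.prems appcol_addcol_nil[of xs' cs] by simp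
  next
    case (Cons q qs) then show ?thesis using xs Cons.prems Cons.IH[of xs' qs] by simp
  qed
qed

lemma SB: "length xs = length Q \<Longrightarrow> length cs = Suc (length Q) \<Longrightarrow>
  map length (appcol xs (addcol cs Q)) = map (\<lambda>l. l + 2) (map length Q) @ [1]"
proof (induction Q arbitrary: xs cs)
  case Nil
  then obtain c where "cs = [c]" by (cases cs) auto
  then show ?case using Nil by simp
next
  case (Cons q qs)
  then obtain c cs' where cs: "cs = c # cs'" by (cases cs) auto
  obtain x xs' where xs: "xs = x # xs'" using Cons.prems by (cases xs) auto
  show ?case using Cons.IH[of xs' cs'] Cons.prems cs xs by simp
qed

lemma addcol_len: "length (addcol cs Q) = max (length cs) (length Q)"
  by (induction cs Q rule: addcol.induct) auto

lemma addcol_nth: "i < length (addcol cs Q) \<Longrightarrow> set (addcol cs Q ! i) \<subseteq> set cs \<union> entries Q"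
proof (induction cs Q arbitrary: i rule: addcol.induct)
  case (1 Q) then show ?case by (auto simp: entries_def intro!: bexI[of _ "Q ! i"])
next
  case (2 d ds) then show ?case by (cases i) (auto simp: entries_def)
next
  case (3 d ds q qs) then show ?case by (cases i) (auto simp: entries_def)
qed

lemma addcol_entries: "entries (addcol cs Q) \<subseteq> set cs \<union> entries Q"
  by (induction cs Q rule: addcol.induct) (auto simp: entries_def)


lemma bump_shift: "bump (map (\<lambda>x. x + c) r) (x + c) = (map (\<lambda>x. x + c) (fst (bump r x)), map_option (\<lambda>x. x + c) (snd (bump r x)))"
  by (induction r x rule: bump.induct) (auto split: prod.splits)

lemma rsk_insert_shift: "rsk_insert (map (map (\<lambda>x. x + c)) T) (x + c) = map (map (\<lambda>x. x + c)) (rsk_insert T x)"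
proof (induction T x rule: rsk_insert.induct)
  case (1 x) then show ?case by simp
next
  case (2 r rs x)
  show ?case
  proof (cases "bump r x")
    case (Pair r' b)
    then show ?thesis using 2 bump_shift[of c r x] by (cases b) auto
  qed
qed

lemma foldl_shift: "foldl rsk_insert (map (map (\<lambda>x. x + c)) T) (map (\<lambda>x. x + c) xs) = map (map (\<lambda>x. x + c)) (foldl rsk_insert T xs)"
  by (induction xs arbitrary: T) (auto simp: rsk_insert_shift)

lemma rsk_P_shift: "rsk_P (map (\<lambda>x. x + c) w) = map (map (\<lambda>x. x + c)) (rsk_P w)"
  using foldl_shift[of c "[]" w] by (simp add: rsk_P_def)

lemma rsk_shape_shift: "rsk_shape (map (\<lambda>x. x + c) w) = rsk_shape w"
  by (simp add: rsk_shape_def rsk_P_shift comp_def)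

lemma col_build: "sorted_wrt (<) ds \<Longrightarrow> foldl rsk_insert [] (rev ds) = addcol ds []"
proof (induction ds)
  case Nil then show ?case by simp
next
  case (Cons d ds)
  then show ?case using CI[of d ds "[]"] by simp
qed

definition W :: "nat \<Rightarrow> nat list \<Rightarrow> nat list" where
  "W r w = rev [2..<2*r] @ [2*r*r] @ map (\<lambda>x. x + (2*r-1)) w @ [1] @ rev [2*r*r-2*r+2..<2*r*r]"

lemma sq_id: fixes r :: nat shows "r \<ge> 1 \<Longrightarrow> 2*r*r = 2*(r-1)^2 + 4*r - 2"
proof -
  assume "r \<ge> 1"
  then obtain t where "r = Suc t" by (cases r) auto
  then show ?thesis by (simp add: power2_eq_square algebra_simps)
qed

lemma W_P:
  assumes r2: "r \<ge> 2" and sw: "set w \<subseteq> {1..2*(r-1)^2}"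
  defines "ds \<equiv> [2..<2*r]" and "n \<equiv> 2*r*r" and "Q \<equiv> rsk_P (map (\<lambda>x. x + (2*r-1)) w)"
      and "E \<equiv> rev [2*r*r-2*r+2..<2*r*r]"
  shows "rsk_P (W r w) = foldl rsk_insert (rsk_insert (addcol ds (Q @ [[n]])) 1) E"
    and "entries Q \<subseteq> {2*r..2*r*r-2*r+1}"
proof -
  define K where "K = 2*(r-1)^2"
  have nK: "n = K + 4*r - 2" using sq_id[of r] r2 unfolding n_def K_def by simp
  define M where "M = map (\<lambda>x. x + (2*r-1)) w"
  have sM: "set M \<subseteq> {2*r..n-2*r+1}"
  proof
    fix y assume "y \<in> set M"
    then obtain x where x: "x \<in> set w" "y = x + (2*r-1)" unfolding M_def by auto
    have "1 \<le> x" "x \<le> K" using sw x(1) unfolding K_def by auto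
    then show "y \<in> {2*r..n-2*r+1}" using x(2) nK r2 by auto
  qed
  have eQ: "entries Q \<subseteq> set M" unfolding Q_def M_def[symmetric] by (rule rsk_P_entries)
  then show "entries Q \<subseteq> {2*r..2*r*r-2*r+1}" using sM n_def by auto
  have sds: "sorted_wrt (<) ds" unfolding ds_def by (simp add: sorted_wrt_upt)
  have s1: "foldl rsk_insert [] (rev ds) = addcol ds []" by (rule col_build[OF sds])
  have s2: "rsk_insert (addcol ds []) n = addcol ds [[n]]"
  proof -
    have "\<forall>d\<in>set ds. d < n" using nK r2 unfolding ds_def by auto
    then show ?thesis using Lprefix[of ds n "[]"] by (auto simp: entries_def)
  qed
  have s3: "foldl rsk_insert (addcol ds [[n]]) M = addcol ds (foldl rsk_insert [[n]] M)"
    apply (rule LprefixF)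
    using sM nK unfolding ds_def by (auto simp: entries_def)
  have s4: "foldl rsk_insert [[n]] M = Q @ [[n]]"
  proof -
    have "\<forall>v\<in>set M. v < n" using sM r2 nK by fastforce
    then show ?thesis using L4F[of "[]" M n] unfolding Q_def M_def[symmetric] rsk_P_def by (auto simp: entries_def)
  qed
  have "rsk_P (W r w) = foldl rsk_insert [] (rev ds @ [n] @ M @ [1] @ E)"
    unfolding rsk_P_def W_def ds_def n_def M_def E_def by simp
  also have "\<dots> = foldl rsk_insert (rsk_insert (addcol ds (Q @ [[n]])) 1) E"
    using s1 s2 s3 s4 by simp
  finally show "rsk_P (W r w) = foldl rsk_insert (rsk_insert (addcol ds (Q @ [[n]])) 1) E" .
qed


lemma addcol_nth_eq: "i < length cs \<Longrightarrow> i < length Q \<Longrightarrow> addcol cs Q ! i = cs ! i # Q ! i"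
proof (induction cs Q arbitrary: i rule: addcol.induct)
  case (3 d ds q qs) then show ?case by (cases i) auto
qed auto

lemma len_rsk_P_shift: "length (rsk_P (map (\<lambda>x. x + c) w)) = length (rsk_P w)"
  by (simp add: rsk_P_shift)

lemma shape_Q: "map length (rsk_P (map (\<lambda>x. x + c) w)) = rsk_shape w"
  using rsk_shape_shift[of c w] by (simp add: rsk_shape_def)

lemma n_ge: fixes r :: nat shows "r \<ge> 2 \<Longrightarrow> 4*r \<le> 2*r*r"
proof -
  assume "r \<ge> 2" then have "2*r*2 \<le> 2*r*r" by (intro mult_le_mono2) auto
  then show ?thesis by simp
qed

lemma W_shape_A:
  assumes r2: "r \<ge> 2" and sw: "set w \<subseteq> {1..2*(r-1)^2}" and lw: "length (rsk_P w) = 2*r-3"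
  shows "rsk_shape (W r w) = map (\<lambda>l. l + 2) (rsk_shape w) @ [2,2]"
proof -
  define ds where "ds = [2..<2*r]"
  define n where "n = 2*r*r"
  define Q where "Q = rsk_P (map (\<lambda>x. x + (2*r-1)) w)"
  define E where "E = rev [2*r*r-2*r+2..<2*r*r]"
  have P: "rsk_P (W r w) = foldl rsk_insert (rsk_insert (addcol ds (Q @ [[n]])) 1) E"
    and eQ: "entries Q \<subseteq> {2*r..2*r*r-2*r+1}"
    using W_P[OF r2 sw] unfolding ds_def n_def Q_def E_def by auto
  have n4: "4*r \<le> n" using n_ge[OF r2] n_def by simp
  have eQ': "entries Q \<subseteq> {2*r..n-2*r+1}" using eQ n_def by simp
  have yb: "\<And>y. y \<in> set (1 # ds) \<or> y \<in> entries Q \<Longrightarrow> y \<le> n-2*r+1"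
  proof -
    fix y assume "y \<in> set (1 # ds) \<or> y \<in> entries Q"
    then show "y \<le> n-2*r+1"
    proof
      assume "y \<in> set (1 # ds)" then show ?thesis using n4 unfolding ds_def by auto
    next
      assume "y \<in> entries Q" then show ?thesis using eQ' by auto
    qed
  qed
  have lQ: "length Q = 2*r-3" using lw len_rsk_P_shift unfolding Q_def by simp
  have lds: "length ds = 2*r-2" unfolding ds_def by simp
  have sds: "sorted_wrt (<) (1 # ds)" unfolding ds_def by (auto simp: sorted_wrt_upt)
  have s4: "rsk_insert (addcol ds (Q @ [[n]])) 1 = addcol (1 # ds) (Q @ [[n]])"
    by (rule CI[OF sds]) (use lQ lds r2 in simp)
  define x0 where "x0 = n-2*r+2"
  define ys1 where "ys1 = rev [Suc x0..<n]"
  have E: "E = ys1 @ [x0]"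
  proof -
    have "[x0..<n] = x0 # [Suc x0..<n]" by (rule upt_conv_Cons) (use n4 r2 in \<open>simp add: x0_def\<close>)
    then show ?thesis unfolding E_def ys1_def x0_def n_def by simp
  qed
  define T0 where "T0 = addcol (1 # ds) (Q @ [[n]])"
  have lT0: "length T0 = 2*r-1" unfolding T0_def addcol_len using lQ lds r2 by simp
  have lys1: "length ys1 = 2*r-3" unfolding ys1_def x0_def using n4 by simp
  have c1: "foldl rsk_insert (appcol [] T0) ys1 = appcol (rev ys1 @ []) T0"
  proof (rule CLs)
    show "sorted_wrt (<) (rev ys1 @ [])" unfolding ys1_def by (simp add: sorted_wrt_upt)
    show "length ys1 + length [] \<le> length T0" using lys1 lT0 by simp
    show "\<forall>i<length ys1 + length []. \<forall>y\<in>set (T0 ! i). \<forall>z\<in>set ys1. y < z"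
    proof (intro allI impI ballI)
      fix i y z assume i: "i < length ys1 + length []" and y: "y \<in> set (T0 ! i)" and z: "z \<in> set ys1"
      have iQ: "i < length Q" using i lys1 lQ by simp
      have "T0 ! i = (1 # ds) ! i # Q ! i"
        unfolding T0_def using addcol_nth_eq[of i "1 # ds" "Q @ [[n]]"] iQ lds lQ by (simp add: nth_append)
      moreover have m1: "(1 # ds) ! i \<in> set (1 # ds)" using iQ lQ lds by (intro nth_mem) simp
      moreover have m2: "set (Q ! i) \<subseteq> entries Q" using iQ by (auto simp: entries_def intro!: bexI[of _ "Q ! i"])
      ultimately have "y \<in> set (1 # ds) \<or> y \<in> entries Q" using y by auto
      moreover have "z \<ge> n-2*r+3" using z unfolding ys1_def x0_def by simp
      ultimately show "y < z" using yb[of y] by simp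
    qed
  qed
  have c2: "appcol (rev ys1) T0 = appcol (rev ys1 @ [n]) (addcol (1 # ds) Q)"
    unfolding T0_def by (rule ID) (use lys1 lQ lds r2 in auto)
  define B where "B = addcol (1 # ds) Q"
  have lB: "length B = 2*r-1" unfolding B_def addcol_len using lQ lds r2 by simp
  have c3: "rsk_insert (appcol (rev ys1 @ [n]) B) x0 = appcol (x0 # rev ys1 @ [n]) B"
  proof (rule CL)
    show "sorted_wrt (<) (x0 # rev ys1 @ [n])" unfolding x0_def ys1_def using n4 r2
      by (auto simp: sorted_wrt_append sorted_wrt_upt)
    show "length (rev ys1 @ [n]) < length B" using lys1 lB r2 by simp
    show "\<forall>i\<le>length (rev ys1 @ [n]). \<forall>y\<in>set (B ! i). y < x0"
    proof (intro allI impI ballI)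
      fix i y assume i: "i \<le> length (rev ys1 @ [n])" and y: "y \<in> set (B ! i)"
      have "i < length B" using i lys1 lB r2 by simp
      then have "y \<in> set (1 # ds) \<or> y \<in> entries Q" using addcol_nth[of i "1 # ds" Q] y unfolding B_def by auto
      then show "y < x0" using yb[of y] unfolding x0_def by simp
    qed
  qed
  have "rsk_P (W r w) = appcol (x0 # rev ys1 @ [n]) B"
    using P s4 E c1 c2 c3 unfolding T0_def[symmetric] B_def[symmetric] by simp
  moreover have "map length (appcol (x0 # rev ys1 @ [n]) B) = map (\<lambda>l. l + 2) (map length Q) @ replicate (length (1 # ds) - length Q) 2"
    unfolding B_def by (rule SA) (use lys1 lQ lds r2 in simp)+
  ultimately have "rsk_shape (W r w) = map (\<lambda>l. l + 2) (map length Q) @ replicate (length (1 # ds) - length Q) 2"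
    unfolding rsk_shape_def by simp
  also have "\<dots> = map (\<lambda>l. l + 2) (rsk_shape w) @ [2,2]"
  proof -
    have "length (1 # ds) - length Q = 2" using lQ lds r2 by simp
    moreover have "map length Q = rsk_shape w" unfolding Q_def by (rule shape_Q)
    ultimately show ?thesis by (simp add: numeral_2_eq_2)
  qed
  finally show ?thesis .
qed


lemma W_shape_B:
  assumes r2: "r \<ge> 2" and sw: "set w \<subseteq> {1..2*(r-1)^2}" and lw: "length (rsk_P w) = 2*r-2"
  shows "rsk_shape (W r w) = map (\<lambda>l. l + 2) (rsk_shape w) @ [1,1]"
proof -
  define ds where "ds = [2..<2*r]"
  define n where "n = 2*r*r"
  define Q where "Q = rsk_P (map (\<lambda>x. x + (2*r-1)) w)"
  define E where "E = rev [2*r*r-2*r+2..<2*r*r]"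
  have P: "rsk_P (W r w) = foldl rsk_insert (rsk_insert (addcol ds (Q @ [[n]])) 1) E"
    and eQ: "entries Q \<subseteq> {2*r..2*r*r-2*r+1}"
    using W_P[OF r2 sw] unfolding ds_def n_def Q_def E_def by auto
  have n4: "4*r \<le> n" using n_ge[OF r2] n_def by simp
  have eQ': "entries Q \<subseteq> {2*r..n-2*r+1}" using eQ n_def by simp
  have yb: "\<And>y. y \<in> set (1 # ds) \<or> y \<in> entries Q \<Longrightarrow> y \<le> n-2*r+1"
  proof -
    fix y assume "y \<in> set (1 # ds) \<or> y \<in> entries Q"
    then show "y \<le> n-2*r+1"
    proof
      assume "y \<in> set (1 # ds)" then show ?thesis using n4 unfolding ds_def by auto
    next
      assume "y \<in> entries Q" then show ?thesis using eQ' by auto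
    qed
  qed
  have lQ: "length Q = 2*r-2" using lw len_rsk_P_shift unfolding Q_def by simp
  have lds: "length ds = 2*r-2" unfolding ds_def by simp
  have sds: "sorted_wrt (<) (1 # ds)" unfolding ds_def by (auto simp: sorted_wrt_upt)
  define B where "B = addcol (1 # ds) Q"
  have lB: "length B = 2*r-1" unfolding B_def addcol_len using lQ lds r2 by simp
  have s4: "rsk_insert (addcol ds (Q @ [[n]])) 1 = B @ [[n]]"
    unfolding B_def
  proof (rule CIB[OF sds])
    show "length Q = length ds" using lQ lds by simp
    show "\<forall>d\<in>set (1 # ds). d < n" using n4 r2 unfolding ds_def by auto
  qed
  have E_def': "E = rev [n-2*r+2..<n]" unfolding E_def n_def by simp
  have lE: "length E = 2*r-2" unfolding E_def' using n4 by simp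
  have eB: "\<forall>y\<in>entries B. y \<le> n-2*r+1"
    using addcol_entries[of "1 # ds" Q] yb unfolding B_def by blast
  have s5: "foldl rsk_insert (B @ [[n]]) E = foldl rsk_insert B E @ [[n]]"
  proof (rule L4F)
    show "\<forall>v\<in>entries B \<union> set E. v < n"
    proof
      fix v assume "v \<in> entries B \<union> set E"
      then show "v < n"
      proof
        assume "v \<in> entries B" then have "v \<le> n-2*r+1" using eB by blast
        then show ?thesis using n4 r2 by linarith
      next
        assume "v \<in> set E" then show ?thesis unfolding E_def' by simp
      qed
    qed
  qed
  have s6: "foldl rsk_insert (appcol [] B) E = appcol (rev E @ []) B"
  proof (rule CLs)
    show "sorted_wrt (<) (rev E @ [])" unfolding E_def' by (simp add: sorted_wrt_upt)
    show "length E + length [] \<le> length B" using lE lB by simp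
    show "\<forall>i<length E + length []. \<forall>y\<in>set (B ! i). \<forall>z\<in>set E. y < z"
    proof (intro allI impI ballI)
      fix i y z assume i: "i < length E + length []" and y: "y \<in> set (B ! i)" and z: "z \<in> set E"
      have "i < length B" using i lE lB by simp
      then have "y \<in> set (1 # ds) \<or> y \<in> entries Q" using addcol_nth[of i "1 # ds" Q] y unfolding B_def by auto
      then have "y \<le> n-2*r+1" by (rule yb)
      moreover have "z \<ge> n-2*r+2" using z unfolding E_def' by simp
      ultimately show "y < z" by simp
    qed
  qed
  have "rsk_P (W r w) = appcol (rev E) B @ [[n]]"
    using P s4 s5 s6 by simp
  moreover have "map length (appcol (rev E) B) = map (\<lambda>l. l + 2) (map length Q) @ [1]"
    unfolding B_def by (rule SB) (use lE lQ lds r2 in simp)+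
  ultimately have "rsk_shape (W r w) = map (\<lambda>l. l + 2) (map length Q) @ [1] @ [1]"
    unfolding rsk_shape_def by simp
  also have "\<dots> = map (\<lambda>l. l + 2) (rsk_shape w) @ [1,1]"
  proof -
    have "map length Q = rsk_shape w" unfolding Q_def by (rule shape_Q)
    then show ?thesis by simp
  qed
  finally show ?thesis .
qed


fun fam :: "nat \<Rightarrow> nat list" where
  "fam 0 = [1,2]"
| "fam (Suc j) = W (j+2) (fam j)"

fun famt :: "nat \<Rightarrow> nat list" where
  "famt 0 = [2,1]"
| "famt (Suc j) = W (j+2) (famt j)"

fun lam :: "nat \<Rightarrow> nat list" where
  "lam 0 = [2]"
| "lam (Suc j) = map (\<lambda>l. l + 2) (lam j) @ [2,2]"

fun mu :: "nat \<Rightarrow> nat list" where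
  "mu 0 = [1,1]"
| "mu (Suc j) = map (\<lambda>l. l + 2) (mu j) @ [1,1]"

lemma len_lam: "length (lam j) = 2*j+1" by (induction j) auto
lemma len_mu: "length (mu j) = 2*j+2" by (induction j) auto

lemma W_set:
  assumes r2: "r \<ge> 2" and sw: "set w = {1..2*(r-1)^2}"
  shows "set (W r w) = {1..2*r*r}"
proof -
  define K where "K = 2*(r-1)^2"
  define n where "n = 2*r*r"
  have nK: "n = K + 4*r - 2" using sq_id[of r] r2 unfolding n_def K_def by simp
  have img: "(\<lambda>x. x + (2*r-1)) ` set w = {2*r..K+2*r-1}"
    unfolding sw K_def[symmetric] image_add_atLeastAtMost' using r2 by simp
  have "set (W r w) = {2..<2*r} \<union> {n} \<union> {2*r..K+2*r-1} \<union> {1} \<union> {n-2*r+2..<n}"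
    unfolding W_def n_def[symmetric] using img by auto
  also have "\<dots> = {1..n}"
  proof (rule set_eqI)
    fix x
    show "x \<in> {2..<2*r} \<union> {n} \<union> {2*r..K+2*r-1} \<union> {1} \<union> {n-2*r+2..<n} \<longleftrightarrow> x \<in> {1..n}"
      using nK r2 by auto
  qed
  finally show ?thesis unfolding n_def .
qed

lemma W_len:
  assumes r2: "r \<ge> 2" and lw: "length w = 2*(r-1)^2"
  shows "length (W r w) = 2*r*r"
  using lw sq_id[of r] r2 unfolding W_def by simp

lemma fam_props: "set (fam j) = {1..2*(j+1)^2} \<and> length (fam j) = 2*(j+1)^2"
proof (induction j)
  case 0 then show ?case by auto
next
  case (Suc j)
  have "set (fam (Suc j)) = {1..2*(j+2)*(j+2)}"
    using W_set[of "j+2" "fam j"] Suc by simp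
  moreover have "length (fam (Suc j)) = 2*(j+2)*(j+2)"
    using W_len[of "j+2" "fam j"] Suc by simp
  ultimately show ?case by (simp add: power2_eq_square)
qed

lemma famt_props: "set (famt j) = {1..2*(j+1)^2} \<and> length (famt j) = 2*(j+1)^2"
proof (induction j)
  case 0 then show ?case by auto
next
  case (Suc j)
  have "set (famt (Suc j)) = {1..2*(j+2)*(j+2)}"
    using W_set[of "j+2" "famt j"] Suc by simp
  moreover have "length (famt (Suc j)) = 2*(j+2)*(j+2)"
    using W_len[of "j+2" "famt j"] Suc by simp
  ultimately show ?case by (simp add: power2_eq_square)
qed

lemma len_rsk_P: "length (rsk_P w) = length (rsk_shape w)" by (simp add: rsk_shape_def)

lemma fam_shape: "rsk_shape (fam j) = lam j \<and> rsk_shape (famt j) = mu j"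
proof (induction j)
  case 0 then show ?case by (simp add: rsk_shape_def rsk_P_def)
next
  case (Suc j)
  have r2: "j + 2 \<ge> 2" by simp
  have sw: "set (fam j) \<subseteq> {1..2*(j+2-1)^2}" using fam_props[of j] by simp
  have swt: "set (famt j) \<subseteq> {1..2*(j+2-1)^2}" using famt_props[of j] by simp
  have l1: "length (rsk_P (fam j)) = 2*(j+2)-3" using Suc len_lam[of j] len_rsk_P[of "fam j"] by simp
  have l2: "length (rsk_P (famt j)) = 2*(j+2)-2" using Suc len_mu[of j] len_rsk_P[of "famt j"] by simp
  show ?case using W_shape_A[OF r2 sw l1] W_shape_B[OF r2 swt l2] Suc by simp
qed

lemma W_swap:
  assumes r2: "r \<ge> 2" and sw: "set w \<subseteq> {1..2*(r-1)^2}" and k1: "1 \<le> k" and k2: "k + 1 \<le> 2*(r-1)^2"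
  shows "W r (map (swap_adj k) w) = map (swap_adj (k + (2*r-1))) (W r w)"
proof -
  define K where "K = 2*(r-1)^2"
  define n where "n = 2*r*r"
  have nK: "n = K + 4*r - 2" using sq_id[of r] r2 unfolding n_def K_def by simp
  define c where "c = 2*r-1"
  have k2': "k + 1 \<le> K" using k2 unfolding K_def .
  have fix1: "\<And>xs. (\<forall>x\<in>set xs. x \<noteq> k + c \<and> x \<noteq> k + c + 1) \<Longrightarrow> map (swap_adj (k+c)) xs = xs"
    by (rule map_idI) (auto simp: swap_adj_def)
  have a: "map (swap_adj (k+c)) (rev [2..<2*r]) = rev [2..<2*r]"
    by (rule fix1) (use k1 in \<open>auto simp: c_def\<close>)
  have b: "map (swap_adj (k+c)) [n] = [n]"
    by (rule fix1) (use k2' nK r2 in \<open>auto simp: c_def\<close>)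
  have d: "map (swap_adj (k+c)) [1] = [1]"
    by (rule fix1) (use k1 r2 in \<open>auto simp: c_def\<close>)
  have e: "map (swap_adj (k+c)) (rev [n-2*r+2..<n]) = rev [n-2*r+2..<n]"
    by (rule fix1) (use k2' nK r2 in \<open>auto simp: c_def\<close>)
  have m: "map (swap_adj (k+c)) (map (\<lambda>x. x + c) w) = map (\<lambda>x. x + c) (map (swap_adj k) w)"
    by (auto simp: swap_adj_def)
  show ?thesis
    unfolding W_def n_def[symmetric] c_def[symmetric]
    using a b d e m by simp
qed

lemma famt_swap: "famt j = map (swap_adj ((j+1)^2)) (fam j)"
proof (induction j)
  case 0 then show ?case by (simp add: swap_adj_def)
next
  case (Suc j)
  have r2: "j + 2 \<ge> 2" by simp
  have sw: "set (fam j) \<subseteq> {1..2*(j+2-1)^2}" using fam_props[of j] by simp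
  have k1: "1 \<le> (j+1)^2" by simp
  have k2: "(j+1)^2 + 1 \<le> 2*(j+2-1)^2" by (simp add: power2_eq_square)
  have "famt (Suc j) = W (j+2) (map (swap_adj ((j+1)^2)) (fam j))" using Suc by simp
  also have "\<dots> = map (swap_adj ((j+1)^2 + (2*(j+2)-1))) (fam (Suc j))"
    using W_swap[OF r2 sw k1 k2] by simp
  also have "(j+1)^2 + (2*(j+2)-1) = (Suc j + 1)^2" by (simp add: power2_eq_square)
  finally show ?case .
qed


lemma rsk_insert_ne: "rsk_insert T x \<noteq> []"
  by (cases T) (auto split: prod.splits option.splits)

lemma rsk_P_ne: "w \<noteq> [] \<Longrightarrow> rsk_P w \<noteq> []"
proof -
  assume "w \<noteq> []"
  then obtain u a where "w = u @ [a]" by (metis rev_exhaust)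
  then show ?thesis by (simp add: rsk_P_def rsk_insert_ne)
qed

lemma pad_foldl: "sorted_wrt (<) xs \<Longrightarrow> (\<forall>v\<in>entries (R # Rs). \<forall>x\<in>set xs. v < x) \<Longrightarrow>
  foldl rsk_insert (R # Rs) xs = (R @ xs) # Rs"
proof (induction xs arbitrary: R)
  case Nil then show ?case by simp
next
  case (Cons x xs)
  have "\<forall>y\<in>set R. y < x" using Cons.prems(2) by (auto simp: entries_def)
  then have "rsk_insert (R # Rs) x = (R @ [x]) # Rs" using bump_append[of R x] by simp
  moreover have "foldl rsk_insert ((R @ [x]) # Rs) xs = ((R @ [x]) @ xs) # Rs"
    apply (rule Cons.IH)
    using Cons.prems by (auto simp: entries_def)
  ultimately show ?case by simp
qed

lemma pad_shape:
  assumes "w \<noteq> []" "sorted_wrt (<) xs" "\<forall>v\<in>set w. \<forall>x\<in>set xs. v < x"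
  shows "rsk_shape (w @ xs) = (hd (rsk_shape w) + length xs) # tl (rsk_shape w)"
proof -
  obtain R Rs where RR: "rsk_P w = R # Rs" using rsk_P_ne[OF assms(1)] by (cases "rsk_P w") auto
  have "\<forall>v\<in>entries (R # Rs). \<forall>x\<in>set xs. v < x" using rsk_P_entries[of w] RR assms(3) by auto
  then have "rsk_P (w @ xs) = (R @ xs) # Rs"
    using pad_foldl[OF assms(2)] RR unfolding rsk_P_def by simp
  then show ?thesis using RR by (simp add: rsk_shape_def)
qed

lemma part_step: "part (map f L @ [a,b]) i =
  (if i < length L then f (L ! i) else if i = length L then a else if i = length L + 1 then b else 0)"
  unfolding part_def by (auto simp: nth_append)

lemma lam_mu_diff: "\<forall>i. \<bar>real (part (lam j) i) - real (part (mu j) i)\<bar> = (if i < 2*j+2 then 1 else 0)"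
proof (induction j)
  case 0 show ?case
  proof
    fix i show "\<bar>real (part (lam 0) i) - real (part (mu 0) i)\<bar> = (if i < 2*0+2 then 1 else 0)"
      unfolding part_def by (cases i; cases "i - 1") auto
  qed
next
  case (Suc j)
  have ll: "length (lam j) = 2*j+1" by (rule len_lam)
  have lm: "length (mu j) = 2*j+2" by (rule len_mu)
  have last_mu: "mu j ! (2*j+1) = 1"
  proof -
    have "\<bar>real (part (lam j) (2*j+1)) - real (part (mu j) (2*j+1))\<bar> = 1" using Suc by simp
    then show ?thesis unfolding part_def using ll lm by simp
  qed
  show ?case
  proof
    fix i
    show "\<bar>real (part (lam (Suc j)) i) - real (part (mu (Suc j)) i)\<bar> = (if i < 2*Suc j+2 then 1 else 0)"
    proof (cases "i < 2*j+1")
      case True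
      have "\<bar>real (part (lam j) i) - real (part (mu j) i)\<bar> = 1" using Suc True by simp
      then have "\<bar>real (lam j ! i) - real (mu j ! i)\<bar> = 1" unfolding part_def using True ll lm by simp
      then show ?thesis using True ll lm by (simp add: part_step)
    next
      case False
      then consider "i = 2*j+1" | "i = 2*j+2" | "i = 2*j+3" | "i \<ge> 2*j+4" by linarith
      then show ?thesis
      proof cases
        case 1 then show ?thesis using ll lm last_mu by (simp add: part_step)
      next
        case 2 then show ?thesis using ll lm by (simp add: part_step)
      next
        case 3 then show ?thesis using ll lm by (simp add: part_step)
      next
        case 4 then show ?thesis using ll lm by (simp add: part_step)
      qed
    qed
  qed
qed

lemma part_pad: "l \<noteq> [] \<Longrightarrow> part ((hd l + c) # tl l) i = part l i + (if i = 0 then c else 0)"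
  unfolding part_def by (cases l; cases i) auto

lemma sum_ind: "(\<Sum>i<N. if i < m then (1::real) else 0) = real (min N m)"
  by (induction N) (auto simp: min_def)

lemma Delta_fam:
  assumes "2*(j+1) \<le> N"
  shows "Delta N ((hd (lam j) + c) # tl (lam j)) ((hd (mu j) + c) # tl (mu j)) = real (j+1)"
proof -
  have nl: "lam j \<noteq> []" using len_lam[of j] by auto
  have nm: "mu j \<noteq> []" using len_mu[of j] by auto
  have "\<And>i. \<bar>real (part ((hd (lam j) + c) # tl (lam j)) i) - real (part ((hd (mu j) + c) # tl (mu j)) i)\<bar>
        = (if i < 2*j+2 then 1 else 0)"
    using lam_mu_diff[of j] part_pad[OF nl] part_pad[OF nm] by simp
  then have "Delta N ((hd (lam j) + c) # tl (lam j)) ((hd (mu j) + c) # tl (mu j)) = (\<Sum>i<N. if i < 2*j+2 then (1::real) else 0) / 2"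
    unfolding Delta_def by simp
  also have "\<dots> = real (j+1)" by (subst sum_ind) (use assms in simp)
  finally show ?thesis .
qed


lemma lim_aux: "(\<lambda>n::nat. 1 / sqrt (real n / 2)) \<longlonglongrightarrow> 0"
proof -
  have h: "filterlim (\<lambda>n::nat. (1/2) * real n) at_top sequentially"
    by (rule filterlim_tendsto_pos_mult_at_top[OF tendsto_const]) (auto simp: filterlim_real_sequentially)
  have "filterlim (\<lambda>n::nat. sqrt ((1/2) * real n)) at_top sequentially"
    by (rule filterlim_compose[OF sqrt_at_top h])
  then have "filterlim (\<lambda>n::nat. sqrt (real n / 2)) at_infinity sequentially"
    by (simp add: filterlim_at_top_imp_at_infinity)
  then show ?thesis by (rule tendsto_divide_0[OF tendsto_const])
qed

definition rr :: "nat \<Rightarrow> nat" where "rr n = nat \<lfloor>sqrt (real n / 2)\<rfloor>"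

lemma rr_le: "real (rr n) \<le> sqrt (real n / 2)"
  unfolding rr_def by (simp add: of_nat_nat)

lemma rr_gt: "sqrt (real n / 2) - 1 < real (rr n)"
  unfolding rr_def by (simp add: of_nat_nat)

lemma rr_ge1: "n \<ge> 2 \<Longrightarrow> rr n \<ge> 1"
proof -
  assume "n \<ge> 2"
  then have "sqrt (real n / 2) \<ge> 1" by simp
  then show ?thesis unfolding rr_def by linarith
qed

lemma rr_sq: "2 * (rr n)^2 \<le> n"
proof -
  have "real (rr n) ^ 2 \<le> sqrt (real n / 2) ^ 2"
    using rr_le[of n] by (intro power_mono) auto
  then have "real (rr n) ^ 2 \<le> real n / 2" by simp
  then have "real (2 * (rr n)^2) \<le> real n" by simp
  then show ?thesis by linarith
qed

definition eps :: "nat \<Rightarrow> real" where "eps n = 1 - real (rr n) / sqrt (real n / 2)"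

lemma eps_nonneg: "0 \<le> eps n"
proof (cases "n = 0")
  case True then show ?thesis by (simp add: eps_def)
next
  case False
  then have "sqrt (real n / 2) > 0" by simp
  then show ?thesis using rr_le[of n] unfolding eps_def by (simp add: divide_le_eq)
qed

lemma eps_lim: "eps \<longlonglongrightarrow> 0"
proof (rule tendsto_sandwich[OF _ _ tendsto_const lim_aux])
  show "\<forall>\<^sub>F n in sequentially. 0 \<le> eps n" using eps_nonneg by simp
  show "\<forall>\<^sub>F n in sequentially. eps n \<le> 1 / sqrt (real n / 2)"
  proof (rule eventually_sequentiallyI[of 1])
    fix n :: nat assume "1 \<le> n"
    then have s: "sqrt (real n / 2) > 0" by simp
    have "eps n = (sqrt (real n / 2) - real (rr n)) / sqrt (real n / 2)"
      unfolding eps_def using s by (simp add: field_simps)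
    also have "\<dots> \<le> 1 / sqrt (real n / 2)"
      using rr_gt[of n] s by (intro divide_right_mono) auto
    finally show "eps n \<le> 1 / sqrt (real n / 2)" .
  qed
qed


theorem theorem3:
  shows "\<exists>\<epsilon> :: nat \<Rightarrow> real. (\<forall>n. 0 \<le> \<epsilon> n) \<and> \<epsilon> \<longlonglongrightarrow> 0 \<and>
    (\<forall>n \<ge> 2. \<exists>\<pi> \<tau>. is_perm n \<pi> \<and> is_perm n \<tau> \<and> perm_dist n \<pi> \<tau> = 1 \<and>
        Delta n (rsk_shape \<pi>) (rsk_shape \<tau>) \<ge> (1 - \<epsilon> n) * sqrt (real n / 2))"
proof (rule exI[of _ eps], intro conjI allI impI)
  show "\<And>n. 0 \<le> eps n" by (rule eps_nonneg)
  show "eps \<longlonglongrightarrow> 0" by (rule eps_lim)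
  fix n :: nat assume n2: "2 \<le> n"
  define r where "r = rr n"
  have r1: "r \<ge> 1" using rr_ge1[OF n2] r_def by simp
  have rn: "2*r*r \<le> n" using rr_sq[of n] r_def by (simp add: power2_eq_square)
  define j where "j = r - 1"
  have rj: "r = j + 1" using r1 j_def by simp
  define pad where "pad = [2*r*r+1..<n+1]"
  define p where "p = fam j @ pad"
  define t where "t = famt j @ pad"
  define k where "k = r*r"
  have fp: "set (fam j) = {1..2*r*r}" "length (fam j) = 2*r*r"
    using fam_props[of j] rj by (auto simp: power2_eq_square)
  have ftp: "set (famt j) = {1..2*r*r}" "length (famt j) = 2*r*r"
    using famt_props[of j] rj by (auto simp: power2_eq_square)
  have setp: "set (fam j @ pad) = {1..n}" unfolding pad_def using fp rn by auto
  have setpt: "set (famt j @ pad) = {1..n}" unfolding pad_def using ftp rn by auto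
  have lenp: "length (fam j @ pad) = n" unfolding pad_def using fp rn by simp
  have lenpt: "length (famt j @ pad) = n" unfolding pad_def using ftp rn by simp
  have isp: "is_perm n p" unfolding is_perm_def p_def
    using setp lenp card_distinct[of "fam j @ pad"] by simp
  have ist: "is_perm n t" unfolding is_perm_def t_def
    using setpt lenpt card_distinct[of "famt j @ pad"] by simp
  have padfix: "map (swap_adj k) pad = pad"
    by (rule map_idI) (use r1 in \<open>auto simp: pad_def swap_adj_def k_def\<close>)
  have tp: "t = map (swap_adj k) p"
    unfolding t_def p_def using famt_swap[of j] rj padfix by (simp add: k_def power2_eq_square)
  have k1: "1 \<le> k" "k \<le> n - 1" using r1 rn unfolding k_def by (auto simp: le_diff_conv2)
  have step: "adj_step n p t" unfolding adj_step_def using k1 tp by auto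
  have neq: "p \<noteq> t"
  proof
    assume "p = t"
    have "k \<in> set p" using setp k1 unfolding p_def by auto
    then obtain i where i: "i < length p" "p ! i = k" by (auto simp: in_set_conv_nth)
    have "t ! i = swap_adj k k" using tp i by simp
    then have "t ! i = k + 1" by (simp add: swap_adj_def)
    then show False using \<open>p = t\<close> i by simp
  qed
  have pd: "perm_dist n p t = 1"
    unfolding perm_dist_def
  proof (rule Least_equality)
    show "(adj_step n ^^ 1) p t" using step by (simp add: eq_OO)
    fix m assume "(adj_step n ^^ m) p t"
    then show "1 \<le> m" using neq by (cases m) auto
  qed
  define c where "c = length pad"
  have fne: "fam j \<noteq> []" "famt j \<noteq> []" using fp ftp r1 by auto
  have spad: "sorted_wrt (<) pad" unfolding pad_def by (rule sorted_wrt_upt)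
  have shp: "rsk_shape p = (hd (lam j) + c) # tl (lam j)"
    unfolding p_def c_def using pad_shape[OF fne(1) spad] fp fam_shape[of j] unfolding pad_def by auto
  have sht: "rsk_shape t = (hd (mu j) + c) # tl (mu j)"
    unfolding t_def c_def using pad_shape[OF fne(2) spad] ftp fam_shape[of j] unfolding pad_def by auto
  have "2*r \<le> 2*r*r" using r1 by simp
  then have "2*r \<le> n" using rn by (rule order_trans)
  then have "2*(j+1) \<le> n" using rj by simp
  then have D: "Delta n (rsk_shape p) (rsk_shape t) = real r"
    using Delta_fam[of j n c] shp sht rj by simp
  have s: "sqrt (real n / 2) > 0" using n2 by simp
  have "(1 - eps n) * sqrt (real n / 2) = real r"
    unfolding eps_def r_def using s by simp
  show "\<exists>\<pi> \<tau>. is_perm n \<pi> \<and> is_perm n \<tau> \<and> perm_dist n \<pi> \<tau> = 1 \<and>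
        Delta n (rsk_shape \<pi>) (rsk_shape \<tau>) \<ge> (1 - eps n) * sqrt (real n / 2)"
  proof (rule exI[of _ p], rule exI[of _ t])
    have "(1 - eps n) * sqrt (real n / 2) \<le> Delta n (rsk_shape p) (rsk_shape t)"
      using D \<open>(1 - eps n) * sqrt (real n / 2) = real r\<close> by simp
    then show "is_perm n p \<and> is_perm n t \<and> perm_dist n p t = 1 \<and>
        Delta n (rsk_shape p) (rsk_shape t) \<ge> (1 - eps n) * sqrt (real n / 2)"
      using isp ist pd by simp
  qed
qed

end
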